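(* Let $(X,\rho)$ be a metric continuum that is hereditarily indecomposable, and suppose $\{(A_0,B_0),(A_1,B_1)\}$ is an essential family of pairs of disjoint closed subsets of $X$ such that $\rho(x,y)>1$ whenever $x\in A_i$ and $y\in B_i$ ($i=0,1$). Let $\mathcal N$ be a finite collection of pairwise disjoint closed subsets of $X$, each of diameter at most $\tfrac12$. Then there is a continuum in $X$ of diameter at least $1$ that is disjoint from every element of $\mathcal N$.
   Context: A continuum is a compact connected metrizable space; it is hereditarily indecomposable if whenever two subcontinua meet, one contains the other. For disjoint closed $A,B\subseteq X$, a closed set $L$ is a partition between $A$ and $B$ if $X\setminus L=U\cup V$ with $U,V$ disjoint open, $A\subseteq U$, $B\subseteq V$. A family $\{(A_i,B_i)\}$ of pairs of disjoint closed sets is essential if for any choice of partitions $L_i$ between $A_i$ and $B_i$ one has $\bigcap_i L_i\neq\emptyset$. *)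

theory Defs
  imports "HOL-Analysis.Analysis"
begin

definition continuum :: "'a::metric_space set \<Rightarrow> bool" where
  "continuum C \<longleftrightarrow> C \<noteq> {} \<and> compact C \<and> connected C"

definition hereditarily_indecomposable :: "'a::metric_space set \<Rightarrow> bool" where
  "hereditarily_indecomposable X \<longleftrightarrow>
     (\<forall>C D. C \<subseteq> X \<and> D \<subseteq> X \<and> continuum C \<and> continuum D \<and> C \<inter> D \<noteq> {}
        \<longrightarrow> C \<subseteq> D \<or> D \<subseteq> C)"

definition partition_between :: "'a::topological_space set \<Rightarrow> 'a set \<Rightarrow> 'a set \<Rightarrow> 'a set \<Rightarrow> bool" where
  "partition_between X A B L \<longleftrightarrow>
     closedin (top_of_set X) L \<and>
     (\<exists>U V. openin (top_of_set X) U \<and> openin (top_of_set X) V \<and> U \<inter> V = {} \<and>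
            X - L = U \<union> V \<and> A \<subseteq> U \<and> B \<subseteq> V)"

definition essential_family :: "'a::topological_space set \<Rightarrow> 'i set \<Rightarrow> ('i \<Rightarrow> 'a set) \<Rightarrow> ('i \<Rightarrow> 'a set) \<Rightarrow> bool" where
  "essential_family X I A B \<longleftrightarrow>
     (\<forall>L. (\<forall>i\<in>I. partition_between X (A i) (B i) (L i)) \<longrightarrow> X \<inter> (\<Inter>i\<in>I. L i) \<noteq> {})"

end

theory Submission
  imports Defs
begin

lemma sep_lemma:
  fixes X :: "'a::metric_space set"
  assumes "compact X" "closedin (top_of_set X) S" "closedin (top_of_set X) T" "S \<inter> T = {}"
  obtains L where "partition_between X S T L" "X - L \<supseteq> S \<union> T" "L \<subseteq> X"
proof -
  have "normal_space (top_of_set X)"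
    by (simp add: assms(1) compact_Hausdorff_or_regular_imp_normal_space compact_space_subtopology Hausdorff_space_subtopology)
  then obtain U V where UV: "openin (top_of_set X) U" "openin (top_of_set X) V" "S \<subseteq> U" "T \<subseteq> V" "disjnt U V"
    using assms unfolding normal_space_def disjnt_def by (metis)
  have "U \<subseteq> X" "V \<subseteq> X" using UV openin_subset by force+
  have "partition_between X S T (X - (U \<union> V))"
    unfolding partition_between_def
    using UV \<open>U \<subseteq> X\<close> \<open>V \<subseteq> X\<close>
    by (intro conjI exI[of _ U] exI[of _ V]) (auto simp: disjnt_def)
  moreover have "S \<union> T \<subseteq> X - (X - (U \<union> V))" using UV \<open>U \<subseteq> X\<close> \<open>V \<subseteq> X\<close> by blast
  moreover have "X - (U \<union> V) \<subseteq> X" by blast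
  ultimately show ?thesis by (rule that)
qed

theorem lemma6p5:
  fixes X :: "'a::metric_space set"
    and A B :: "nat \<Rightarrow> 'a set"
    and \<N> :: "'a set set"
  assumes "continuum X"
    and "hereditarily_indecomposable X"
    and "\<forall>i\<in>{0,1}. closedin (top_of_set X) (A i) \<and> closedin (top_of_set X) (B i) \<and> A i \<inter> B i = {}"
    and "essential_family X {0,1} A B"
    and "\<forall>i\<in>{0,1}. \<forall>x\<in>A i. \<forall>y\<in>B i. dist x y > 1"
    and "finite \<N>"
    and "\<forall>N\<in>\<N>. closedin (top_of_set X) N \<and> diameter N \<le> 1/2"
    and "pairwise disjnt \<N>"
  shows "\<exists>C. C \<subseteq> X \<and> continuum C \<and> diameter C \<ge> 1 \<and> (\<forall>N\<in>\<N>. C \<inter> N = {})"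
proof (rule ccontr)
  assume H0: "\<not> ?thesis"
  have H: "diameter C < 1" if "C \<subseteq> X" "continuum C" "\<And>N. N\<in>\<N> \<Longrightarrow> C \<inter> N = {}" for C
  proof (rule ccontr)
    assume "\<not> diameter C < 1"
    then have "1 \<le> diameter C" by simp
    then show False using H0 that by blast
  qed
  have cX: "compact X" using assms(1) by (simp add: continuum_def)
  have cA0: "closedin (top_of_set X) (A 0)" "closedin (top_of_set X) (B 0)" "A 0 \<inter> B 0 = {}"
   and cA1: "closedin (top_of_set X) (A 1)" "closedin (top_of_set X) (B 1)" "A 1 \<inter> B 1 = {}"
    using assms(3) by auto
  have Ncl: "closedin (top_of_set X) N" and Ndiam: "diameter N \<le> 1/2" if "N \<in> \<N>" for N
    using assms(7) that by auto
  have Nbd: "bounded N" if "N \<in> \<N>" for N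
  proof -
    have "compact N" using Ncl[OF that] cX
      by (meson closedin_compact compact_imp_closed)
    then show ?thesis by (rule compact_imp_bounded)
  qed
  define A' where "A' = A 0 \<union> \<Union>{N\<in>\<N>. N \<inter> A 0 \<noteq> {}}"
  define B' where "B' = B 0 \<union> \<Union>{N\<in>\<N>. N \<inter> A 0 = {}}"
  have cA': "closedin (top_of_set X) A'"
    unfolding A'_def using assms(6) cA0 Ncl
    by (intro closedin_Un closedin_Union) auto
  have cB': "closedin (top_of_set X) B'"
    unfolding B'_def using assms(6) cA0 Ncl
    by (intro closedin_Un closedin_Union) auto
  have NB: "N \<inter> B 0 = {}" if "N \<in> \<N>" "N \<inter> A 0 \<noteq> {}" for N
  proof (rule ccontr)
    assume "N \<inter> B 0 \<noteq> {}"
    then obtain a b where "a \<in> N" "a \<in> A 0" "b \<in> N" "b \<in> B 0" using \<open>N \<inter> A 0 \<noteq> {}\<close> by blast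
    then have "dist a b \<le> diameter N" using Nbd[OF that(1)] diameter_bounded_bound by blast
    moreover have "dist a b > 1" using assms(5) \<open>a \<in> A 0\<close> \<open>b \<in> B 0\<close> by auto
    ultimately show False using Ndiam[OF that(1)] by linarith
  qed
  have dAB': "A' \<inter> B' = {}"
  proof -
    have "N \<inter> M = {}" if "N \<in> \<N>" "M \<in> \<N>" "N \<inter> A 0 \<noteq> {}" "M \<inter> A 0 = {}" for N M
    proof -
      have "N \<noteq> M" using that by blast
      then show ?thesis using assms(8) that(1,2) unfolding pairwise_def disjnt_def by blast
    qed
    then show ?thesis unfolding A'_def B'_def using cA0(3) NB by blast
  qed
  obtain L0 where L0: "partition_between X A' B' L0" "X - L0 \<supseteq> A' \<union> B'" "L0 \<subseteq> X"
    using sep_lemma[OF cX cA' cB' dAB'] by blast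
  have L0p: "partition_between X (A 0) (B 0) L0"
  proof -
    have s: "A 0 \<subseteq> A'" "B 0 \<subseteq> B'" unfolding A'_def B'_def by blast+
    from L0(1) obtain U V where "closedin (top_of_set X) L0" "openin (top_of_set X) U"
       "openin (top_of_set X) V" "U \<inter> V = {}" "X - L0 = U \<union> V" "A' \<subseteq> U" "B' \<subseteq> V"
      unfolding partition_between_def by blast
    then show ?thesis unfolding partition_between_def using s
      by (intro conjI exI[of _ U] exI[of _ V]) auto
  qed
  have L0N: "L0 \<inter> N = {}" if "N \<in> \<N>" for N
  proof (cases "N \<inter> A 0 = {}")
    case True
    then have "N \<subseteq> B'" unfolding B'_def using that by blast
    then show ?thesis using L0(2) by blast
  next
    case False
    then have "N \<subseteq> A'" unfolding A'_def using that by blast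
    then show ?thesis using L0(2) by blast
  qed
  have L0cl: "closedin (top_of_set X) L0" using L0(1) partition_between_def by blast
  have cL0: "compact L0" using L0cl cX by (meson closedin_compact compact_imp_closed)
  have "separated_between (top_of_set L0) (L0 \<inter> A 1) (L0 \<inter> B 1)"
  proof (rule cut_wire_fence_theorem)
    show "compact_space (top_of_set L0)" using cL0 by (simp add: compact_space_subtopology)
    show "Hausdorff_space (top_of_set L0)" by (simp add: Hausdorff_space_subtopology)
    show "closedin (top_of_set L0) (L0 \<inter> A 1)"
      using closedin_Int[OF L0cl cA1(1)] closedin_subset_trans[of X "L0 \<inter> A 1" L0] L0(3) by blast
    show "closedin (top_of_set L0) (L0 \<inter> B 1)"
      using closedin_Int[OF L0cl cA1(2)] closedin_subset_trans[of X "L0 \<inter> B 1" L0] L0(3) by blast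
    fix C assume "connectedin (top_of_set L0) C"
    then have Cc: "connected C" "C \<subseteq> L0" by (auto simp: connectedin_subtopology)
    show "disjnt C (L0 \<inter> A 1) \<or> disjnt C (L0 \<inter> B 1)"
    proof (rule ccontr)
      assume "\<not> ?thesis"
      then obtain a b where ab: "a \<in> C" "a \<in> A 1" "b \<in> C" "b \<in> B 1" by (auto simp: disjnt_def)
      have clsub: "closure C \<subseteq> L0" using Cc(2) cL0 by (simp add: closure_minimal compact_imp_closed)
      have bC: "bounded C" using Cc(2) cL0 bounded_subset compact_imp_bounded by blast
      have ccl: "compact (closure C)"
        using compact_Int_closed[OF cL0 closed_closure[of C]] clsub by (simp add: Int_absorb1)
      have cc: "continuum (closure C)" unfolding continuum_def
        using ab bC Cc(1) by (auto simp: ccl connected_imp_connected_closure closure_eq_empty)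
      have cX': "closure C \<subseteq> X" using clsub L0(3) by blast
      have cN: "closure C \<inter> N = {}" if "N \<in> \<N>" for N using clsub L0N[OF that] by blast
      have "diameter (closure C) < 1" by (rule H[OF cX' cc cN])
      moreover have "dist a b \<le> diameter (closure C)"
        using ab bC by (meson bounded_closure closure_subset diameter_bounded_bound subsetD)
      moreover have "dist a b > 1" using assms(5) ab by auto
      ultimately show False by linarith
    qed
  qed
  then obtain P Q where PQ: "closedin (top_of_set L0) P" "closedin (top_of_set L0) Q" "P \<union> Q = L0"
      "disjnt P Q" "L0 \<inter> A 1 \<subseteq> P" "L0 \<inter> B 1 \<subseteq> Q"
    unfolding separated_between_alt by auto
  have PX: "closedin (top_of_set X) P" "closedin (top_of_set X) Q"
    using PQ(1,2) L0cl closedin_trans by blast+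
  have cA'': "closedin (top_of_set X) (A 1 \<union> P)" using PX cA1 by blast
  have cB'': "closedin (top_of_set X) (B 1 \<union> Q)" using PX cA1 by blast
  have dAB'': "(A 1 \<union> P) \<inter> (B 1 \<union> Q) = {}"
    using PQ cA1(3) by (auto simp: disjnt_def)
  obtain L1 where L1: "partition_between X (A 1 \<union> P) (B 1 \<union> Q) L1" "X - L1 \<supseteq> (A 1 \<union> P) \<union> (B 1 \<union> Q)" "L1 \<subseteq> X"
    using sep_lemma[OF cX cA'' cB'' dAB''] by blast
  have L1p: "partition_between X (A 1) (B 1) L1"
    using L1(1) unfolding partition_between_def by blast
  define L where "L = (\<lambda>i::nat. if i = 0 then L0 else L1)"
  have "\<forall>i\<in>{0,1}. partition_between X (A i) (B i) (L i)"
    using L0p L1p by (auto simp: L_def)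
  then have "X \<inter> (\<Inter>i\<in>{0,1}. L i) \<noteq> {}" using assms(4) unfolding essential_family_def by blast
  moreover have "L0 \<inter> L1 = {}" using L1(2) PQ(3) by blast
  ultimately show False by (auto simp: L_def)
qed
end
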